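(* Let $(X_{1,\infty},f_{1,\infty},\mu_{1,\infty})$ and $(Y_{1,\infty},g_{1,\infty},\nu_{1,\infty})$ be metric nonautonomous dynamical systems with admissible classes $\mathcal{E}$ (for $f_{1,\infty}$) and $\mathcal{F}$ (for $g_{1,\infty}$), respectively. Let $\pi_{1,\infty}=\{\pi_n\}$ be an $\mathcal{E}$-$\mathcal{F}$-semiconjugacy from $f_{1,\infty}$ to $g_{1,\infty}$. Then $h_{\mathcal{F}}(g_{1,\infty})\le h_{\mathcal{E}}(f_{1,\infty})$.
   Context: A metric NDS consists of probability spaces $(X_n,\mathcal{A}_n,\mu_n)$ and measurable maps $f_n:X_n\to X_{n+1}$ with $f_n\mu_n=\mu_{n+1}$. Notation: $f_k^n=f_{k+n-1}\circ\cdots\circ f_k$, $f_k^0=\mathrm{id}$, $f_k^{-n}$ = preimage under $f_k^n$. $H_\mu(\mathcal{P})=-\sum_P\mu(P)\log\mu(P)$; $h(f_{1,\infty};\mathcal{P}_{1,\infty})=\limsup_n\frac1nH_{\mu_1}(\bigvee_{i=0}^{n-1}f_1^{-i}\mathcal{P}_{i+1})$ for sequences $\mathcal{P}_{1,\infty}=\{\mathcal{P}_n\}$ of finite measurable partitions of $X_n$; $h_{\mathcal{E}}(f_{1,\infty})=\sup_{\mathcal{P}_{1,\infty}\in\mathcal{E}}h(f_{1,\infty};\mathcal{P}_{1,\infty})$. Admissible class: a nonempty class $\mathcal{E}$ of such sequences satisfying (A) each member has uniformly bounded cardinalities $\#\mathcal{P}_n\le N$; (B) closed under passing to coarser sequences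 (termwise coarser); (C) closed under $\mathcal{P}_{1,\infty}\mapsto\{\bigvee_{i=0}^{m-1}f_k^{-i}\mathcal{P}_{k+i}\}_{k\ge1}$ for every $m\ge1$. An $\mathcal{E}$-$\mathcal{F}$-semiconjugacy is a sequence of measurable maps $\pi_n:X_n\to Y_n$ with $\pi_n\mu_n=\nu_n$ and $\pi_{n+1}\circ f_n=g_n\circ\pi_n$ for all $n$, such that $\{\mathcal{P}_n\}\in\mathcal{F}$ implies $\{\pi_n^{-1}(\mathcal{P}_n)\}\in\mathcal{E}$. *)

theory Defs
  imports "HOL-Probability.Probability"
begin

text \<open>Conventions: indices start at 0 (X_0, X_1, ...) instead of 1; this is a pure
  reindexing of the paper's setup.\<close>

definition is_partition :: "'a measure \<Rightarrow> 'a set set \<Rightarrow> bool" where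
  "is_partition M P \<longleftrightarrow> finite P \<and> P \<subseteq> sets M \<and> {} \<notin> P \<and>
     (\<forall>A\<in>P. \<forall>B\<in>P. A \<noteq> B \<longrightarrow> A \<inter> B = {}) \<and> \<Union>P = space M"

definition coarser :: "'a set set \<Rightarrow> 'a set set \<Rightarrow> bool" where
  "coarser Q P \<longleftrightarrow> (\<forall>A\<in>P. \<exists>B\<in>Q. A \<subseteq> B)"

definition join :: "'a set set \<Rightarrow> 'a set set \<Rightarrow> 'a set set" where
  "join P Q = {A \<inter> B | A B. A \<in> P \<and> B \<in> Q} - {{}}"

definition pull :: "('a \<Rightarrow> 'b) \<Rightarrow> 'a set \<Rightarrow> 'b set set \<Rightarrow> 'a set set" where
  "pull \<phi> S Q = {\<phi> -` B \<inter> S | B. B \<in> Q} - {{}}"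

fun joinN :: "'a set \<Rightarrow> (nat \<Rightarrow> 'a set set) \<Rightarrow> nat \<Rightarrow> 'a set set" where
  "joinN S Q 0 = {S}"
| "joinN S Q (Suc n) = join (joinN S Q n) (Q n)"

fun iter :: "(nat \<Rightarrow> 'a \<Rightarrow> 'a) \<Rightarrow> nat \<Rightarrow> nat \<Rightarrow> 'a \<Rightarrow> 'a" where
  "iter f k 0 = id"
| "iter f k (Suc n) = f (k + n) \<circ> iter f k n"

definition part_entropy :: "'a measure \<Rightarrow> 'a set set \<Rightarrow> real" where
  "part_entropy M P = - (\<Sum>A\<in>P. measure M A * ln (measure M A))"

definition metric_NDS :: "(nat \<Rightarrow> 'a measure) \<Rightarrow> (nat \<Rightarrow> 'a \<Rightarrow> 'a) \<Rightarrow> bool" where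
  "metric_NDS M f \<longleftrightarrow> (\<forall>n. prob_space (M n) \<and> f n \<in> measurable (M n) (M (Suc n)) \<and>
      distr (M n) (M (Suc n)) (f n) = M (Suc n))"

definition block_join :: "(nat \<Rightarrow> 'a measure) \<Rightarrow> (nat \<Rightarrow> 'a \<Rightarrow> 'a) \<Rightarrow> (nat \<Rightarrow> 'a set set)
    \<Rightarrow> nat \<Rightarrow> nat \<Rightarrow> 'a set set" where
  "block_join M f P m k = joinN (space (M k)) (\<lambda>i. pull (iter f k i) (space (M k)) (P (k + i))) m"

definition ent_seq :: "(nat \<Rightarrow> 'a measure) \<Rightarrow> (nat \<Rightarrow> 'a \<Rightarrow> 'a) \<Rightarrow> (nat \<Rightarrow> 'a set set) \<Rightarrow> ereal" where
  "ent_seq M f P = limsup (\<lambda>n. ereal (part_entropy (M 0) (block_join M f P n 0) / real n))"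

definition ent_class :: "(nat \<Rightarrow> 'a measure) \<Rightarrow> (nat \<Rightarrow> 'a \<Rightarrow> 'a) \<Rightarrow> (nat \<Rightarrow> 'a set set) set \<Rightarrow> ereal" where
  "ent_class M f E = (SUP P\<in>E. ent_seq M f P)"

definition admissible :: "(nat \<Rightarrow> 'a measure) \<Rightarrow> (nat \<Rightarrow> 'a \<Rightarrow> 'a) \<Rightarrow> (nat \<Rightarrow> 'a set set) set \<Rightarrow> bool" where
  "admissible M f E \<longleftrightarrow> E \<noteq> {} \<and>
     (\<forall>P\<in>E. \<forall>n. is_partition (M n) (P n)) \<and>
     (\<forall>P\<in>E. \<exists>N::nat. \<forall>n. card (P n) \<le> N) \<and>
     (\<forall>P\<in>E. \<forall>Q. (\<forall>n. is_partition (M n) (Q n) \<and> coarser (Q n) (P n)) \<longrightarrow> Q \<in> E) \<and>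
     (\<forall>P\<in>E. \<forall>m\<ge>1. block_join M f P m \<in> E)"

definition semiconj :: "(nat \<Rightarrow> 'a measure) \<Rightarrow> (nat \<Rightarrow> 'a \<Rightarrow> 'a) \<Rightarrow> (nat \<Rightarrow> 'a set set) set \<Rightarrow>
    (nat \<Rightarrow> 'b measure) \<Rightarrow> (nat \<Rightarrow> 'b \<Rightarrow> 'b) \<Rightarrow> (nat \<Rightarrow> 'b set set) set \<Rightarrow>
    (nat \<Rightarrow> 'a \<Rightarrow> 'b) \<Rightarrow> bool" where
  "semiconj M f E N g F \<pi> \<longleftrightarrow>
     (\<forall>n. \<pi> n \<in> measurable (M n) (N n) \<and> distr (M n) (N n) (\<pi> n) = N n \<and>
          (\<forall>x\<in>space (M n). \<pi> (Suc n) (f n x) = g n (\<pi> n x))) \<and>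
     (\<forall>Q\<in>F. (\<lambda>n. pull (\<pi> n) (space (M n)) (Q n)) \<in> E)"

end

theory Submission
  imports Defs
begin

lemma pull_comp:
  assumes "\<phi> ` S \<subseteq> T"
  shows "pull \<phi> S (pull \<psi> T Q) = pull (\<psi> \<circ> \<phi>) S Q"
proof -
  have e: "\<phi> -` (\<psi> -` B \<inter> T) \<inter> S = (\<psi> \<circ> \<phi>) -` B \<inter> S" for B
    using assms by auto
  show ?thesis unfolding pull_def
  proof (intro equalityI subsetI)
    fix x assume "x \<in> {\<phi> -` B \<inter> S |B. B \<in> {\<psi> -` B \<inter> T |B. B \<in> Q} - {{}}} - {{}}"
    then show "x \<in> {(\<psi> \<circ> \<phi>) -` B \<inter> S |B. B \<in> Q} - {{}}" using e by auto
  next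
    fix x assume x: "x \<in> {(\<psi> \<circ> \<phi>) -` B \<inter> S |B. B \<in> Q} - {{}}"
    then obtain B where B: "B \<in> Q" "x = (\<psi> \<circ> \<phi>) -` B \<inter> S" "x \<noteq> {}" by auto
    have "\<psi> -` B \<inter> T \<noteq> {}"
    proof -
      obtain z where "z \<in> x" using B(3) by blast
      then have "\<phi> z \<in> \<psi> -` B \<inter> T" using B(2) assms by auto
      then show ?thesis by blast
    qed
    then have "\<psi> -` B \<inter> T \<in> {\<psi> -` B \<inter> T |B. B \<in> Q} - {{}}" using B by blast
    moreover have "x = \<phi> -` (\<psi> -` B \<inter> T) \<inter> S" using B e[of B] by simp
    ultimately show "x \<in> {\<phi> -` B \<inter> S |B. B \<in> {\<psi> -` B \<inter> T |B. B \<in> Q} - {{}}} - {{}}"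
      using B(3) by blast
  qed
qed

lemma pull_cong:
  assumes "\<And>x. x \<in> S \<Longrightarrow> \<phi> x = \<psi> x"
  shows "pull \<phi> S Q = pull \<psi> S Q"
proof -
  have "\<phi> -` B \<inter> S = \<psi> -` B \<inter> S" for B using assms by auto
  then show ?thesis unfolding pull_def by simp
qed

lemma join_pull:
  "join (pull \<phi> S A) (pull \<phi> S B) = pull \<phi> S (join A B)"
  unfolding join_def pull_def
proof (intro equalityI subsetI)
  fix x assume "x \<in> {a \<inter> b |a b. a \<in> {\<phi> -` B \<inter> S |B. B \<in> A} - {{}} \<and> b \<in> {\<phi> -` Ba \<inter> S |Ba. Ba \<in> B} - {{}}} - {{}}"
  then obtain a b where ab: "a \<in> A" "b \<in> B" "x = (\<phi> -` a \<inter> S) \<inter> (\<phi> -` b \<inter> S)" "x \<noteq> {}" by blast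
  then have x: "x = \<phi> -` (a \<inter> b) \<inter> S" "a \<inter> b \<noteq> {}" by auto
  have "a \<inter> b \<in> {a \<inter> b |a b. a \<in> A \<and> b \<in> B} - {{}}" using ab x by blast
  then show "x \<in> {\<phi> -` Ba \<inter> S |Ba. Ba \<in> {a \<inter> b |a b. a \<in> A \<and> b \<in> B} - {{}}} - {{}}"
    using ab x by blast
next
  fix x assume "x \<in> {\<phi> -` Ba \<inter> S |Ba. Ba \<in> {a \<inter> b |a b. a \<in> A \<and> b \<in> B} - {{}}} - {{}}"
  then obtain a b where ab: "a \<in> A" "b \<in> B" "x = \<phi> -` (a \<inter> b) \<inter> S" "x \<noteq> {}" by blast
  then have x: "x = (\<phi> -` a \<inter> S) \<inter> (\<phi> -` b \<inter> S)" "\<phi> -` a \<inter> S \<noteq> {}" "\<phi> -` b \<inter> S \<noteq> {}" by auto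
  have "\<phi> -` a \<inter> S \<in> {\<phi> -` B \<inter> S |B. B \<in> A} - {{}}" using ab x by blast
  moreover have "\<phi> -` b \<inter> S \<in> {\<phi> -` Ba \<inter> S |Ba. Ba \<in> B} - {{}}" using ab x by blast
  ultimately show "x \<in> {a \<inter> b |a b. a \<in> {\<phi> -` B \<inter> S |B. B \<in> A} - {{}} \<and> b \<in> {\<phi> -` Ba \<inter> S |Ba. Ba \<in> B} - {{}}} - {{}}"
    using x(1) ab(4) by blast
qed

lemma joinN_pull:
  assumes "\<phi> ` S \<subseteq> T" "S \<noteq> {}"
  shows "joinN S (\<lambda>i. pull \<phi> S (R i)) n = pull \<phi> S (joinN T R n)"
proof (induction n)
  case 0
  have "\<phi> -` T \<inter> S = S" using assms by auto
  then show ?case using assms(2) by (simp add: pull_def)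
next
  case (Suc n)
  then show ?case by (simp add: join_pull)
qed

definition nice :: "'b measure \<Rightarrow> 'b set set \<Rightarrow> bool" where
  "nice N B \<longleftrightarrow> finite B \<and> B \<subseteq> sets N \<and> (\<forall>a\<in>B. \<forall>b\<in>B. a \<noteq> b \<longrightarrow> a \<inter> b = {})"

lemma nice_join: "nice N A \<Longrightarrow> nice N B \<Longrightarrow> nice N (join A B)"
proof -
  assume A: "nice N A" and B: "nice N B"
  have "join A B \<subseteq> (\<lambda>(a,b). a \<inter> b) ` (A \<times> B)" unfolding join_def by auto
  then have "finite (join A B)" using A B unfolding nice_def
    by (meson finite_SigmaI finite_imageI finite_subset)
  moreover have "join A B \<subseteq> sets N" using A B unfolding nice_def join_def by auto
  moreover have "\<forall>x\<in>join A B. \<forall>y\<in>join A B. x \<noteq> y \<longrightarrow> x \<inter> y = {}"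
  proof (intro ballI impI)
    fix x y assume "x \<in> join A B" "y \<in> join A B" "x \<noteq> y"
    then obtain a b a' b' where "a \<in> A" "b \<in> B" "a' \<in> A" "b' \<in> B" "x = a \<inter> b" "y = a' \<inter> b'"
      unfolding join_def by blast
    then show "x \<inter> y = {}" using A B \<open>x \<noteq> y\<close> unfolding nice_def by blast
  qed
  ultimately show ?thesis unfolding nice_def by blast
qed

lemma nice_joinN: "T \<in> sets N \<Longrightarrow> (\<And>i. nice N (R i)) \<Longrightarrow> nice N (joinN T R n)"
  by (induction n) (auto simp: nice_def[of N "{T}"] nice_join)

lemma nice_pull:
  assumes "h \<in> measurable N K" "nice K Q"
  shows "nice N (pull h (space N) Q)"
proof -
  have "finite (pull h (space N) Q)" using assms(2) unfolding pull_def nice_def by auto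
  moreover have "pull h (space N) Q \<subseteq> sets N" using assms unfolding pull_def nice_def
    by (auto intro: measurable_sets)
  moreover have "\<forall>x\<in>pull h (space N) Q. \<forall>y\<in>pull h (space N) Q. x \<noteq> y \<longrightarrow> x \<inter> y = {}"
    using assms(2) unfolding pull_def nice_def by blast
  ultimately show ?thesis unfolding nice_def by blast
qed

lemma entropy_pull:
  assumes mp: "\<pi> \<in> measurable M N" and d: "distr M N \<pi> = N" and B: "nice N B"
  shows "part_entropy M (pull \<pi> (space M) B) = part_entropy N B"
proof -
  define h where "h b = \<pi> -` b \<inter> space M" for b
  define B' where "B' = {b\<in>B. h b \<noteq> {}}"
  have meq: "measure M (h b) = measure N b" if "b \<in> B" for b
  proof -
    have "b \<in> sets N" using B that unfolding nice_def by auto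
    then have "measure (distr M N \<pi>) b = measure M (h b)"
      unfolding h_def by (simp add: measure_distr mp)
    then show ?thesis using d by simp
  qed
  have pe: "pull \<pi> (space M) B = h ` B'"
    unfolding pull_def B'_def h_def by auto
  have inj: "inj_on h B'"
  proof (rule inj_onI)
    fix x y assume "x \<in> B'" "y \<in> B'" "h x = h y"
    then show "x = y" using B unfolding B'_def nice_def h_def by blast
  qed
  have fin: "finite B" using B unfolding nice_def by auto
  have "(\<Sum>A\<in>h ` B'. measure M A * ln (measure M A)) = (\<Sum>b\<in>B'. measure M (h b) * ln (measure M (h b)))"
    using inj by (simp add: sum.reindex)
  also have "\<dots> = (\<Sum>b\<in>B'. measure N b * ln (measure N b))"
    by (rule sum.cong) (auto simp: B'_def meq)
  also have "\<dots> = (\<Sum>b\<in>B. measure N b * ln (measure N b))"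
  proof (rule sum.mono_neutral_left[OF fin])
    show "B' \<subseteq> B" unfolding B'_def by auto
    show "\<forall>i\<in>B - B'. measure N i * ln (measure N i) = 0"
    proof
      fix b assume "b \<in> B - B'"
      then have "measure N b = measure M {}" using meq[of b] unfolding B'_def by auto
      then show "measure N b * ln (measure N b) = 0" by simp
    qed
  qed
  finally show ?thesis unfolding part_entropy_def pe by simp
qed

lemma iter_meas:
  assumes "metric_NDS M f"
  shows "iter f 0 i \<in> measurable (M 0) (M i)"
proof (induction i)
  case 0 then show ?case by simp
next
  case (Suc i)
  have "f i \<in> measurable (M i) (M (Suc i))" using assms unfolding metric_NDS_def by blast
  then show ?case using Suc by (simp add: measurable_comp)
qed

lemma iter_comm:
  assumes "metric_NDS M f" "semiconj M f E N g F \<pi>" "x \<in> space (M 0)"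
  shows "\<pi> i (iter f 0 i x) = iter g 0 i (\<pi> 0 x)"
proof (induction i)
  case 0 then show ?case by simp
next
  case (Suc i)
  have "iter f 0 i x \<in> space (M i)" by (rule measurable_space[OF iter_meas[OF assms(1)] assms(3)])
  moreover have "\<forall>y\<in>space (M i). \<pi> (Suc i) (f i y) = g i (\<pi> i y)"
    using assms(2) unfolding semiconj_def by blast
  ultimately show ?case using Suc by simp
qed

theorem mainTheorem3:
  fixes M :: "nat \<Rightarrow> 'a measure" and f :: "nat \<Rightarrow> 'a \<Rightarrow> 'a"
    and N :: "nat \<Rightarrow> 'b measure" and g :: "nat \<Rightarrow> 'b \<Rightarrow> 'b"
    and E :: "(nat \<Rightarrow> 'a set set) set" and F :: "(nat \<Rightarrow> 'b set set) set"
    and \<pi> :: "nat \<Rightarrow> 'a \<Rightarrow> 'b"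
  assumes "metric_NDS M f" and "metric_NDS N g"
    and "admissible M f E" and "admissible N g F"
    and "semiconj M f E N g F \<pi>"
  shows "ent_class N g F \<le> ent_class M f E"
proof -
  have key: "ent_seq N g Q = ent_seq M f (\<lambda>n. pull (\<pi> n) (space (M n)) (Q n))" if Q: "Q \<in> F" for Q
  proof -
    define S where "S = space (M 0)"
    define T where "T = space (N 0)"
    have pm: "\<pi> n \<in> measurable (M n) (N n)" "distr (M n) (N n) (\<pi> n) = N n" for n
      using assms(5) unfolding semiconj_def by blast+
    have "prob_space (M 0)" using assms(1) unfolding metric_NDS_def by blast
    then have S0: "S \<noteq> {}" unfolding S_def by (rule prob_space.not_empty)
    have piS: "\<pi> 0 ` S \<subseteq> T" unfolding S_def T_def using measurable_space[OF pm(1)[of 0]] by blast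
    define R where "R i = pull (iter g 0 i) T (Q i)" for i
    have part: "is_partition (N n) (Q n)" for n using assms(4) Q unfolding admissible_def by blast
    have niceQ: "nice (N n) (Q n)" for n using part[of n] unfolding is_partition_def nice_def by auto
    have niceR: "nice (N 0) (R i)" for i
      unfolding R_def T_def by (rule nice_pull[OF iter_meas[OF assms(2)] niceQ])
    have eqi: "pull (iter f 0 i) S (pull (\<pi> i) (space (M i)) (Q i)) = pull (\<pi> 0) S (R i)" for i
    proof -
      have fS: "iter f 0 i ` S \<subseteq> space (M i)" unfolding S_def
        using measurable_space[OF iter_meas[OF assms(1)]] by blast
      have gT: "\<pi> 0 ` S \<subseteq> T" by (rule piS)
      have "pull (iter f 0 i) S (pull (\<pi> i) (space (M i)) (Q i)) = pull (\<pi> i \<circ> iter f 0 i) S (Q i)"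
        by (rule pull_comp[OF fS])
      also have "\<dots> = pull (iter g 0 i \<circ> \<pi> 0) S (Q i)"
        by (rule pull_cong) (simp add: iter_comm[OF assms(1) assms(5)] S_def)
      also have "\<dots> = pull (\<pi> 0) S (R i)" unfolding R_def by (rule pull_comp[OF gT, symmetric])
      finally show ?thesis .
    qed
    have bj: "block_join M f (\<lambda>n. pull (\<pi> n) (space (M n)) (Q n)) n 0 = pull (\<pi> 0) S (block_join N g Q n 0)" for n
    proof -
      have "block_join M f (\<lambda>n. pull (\<pi> n) (space (M n)) (Q n)) n 0 = joinN S (\<lambda>i. pull (\<pi> 0) S (R i)) n"
        unfolding block_join_def S_def[symmetric] by (simp add: eqi)
      also have "\<dots> = pull (\<pi> 0) S (joinN T R n)" by (rule joinN_pull[OF piS S0])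
      finally show ?thesis unfolding block_join_def T_def[symmetric] R_def by simp
    qed
    have niceB: "nice (N 0) (block_join N g Q n 0)" for n
    proof -
      have "nice (N 0) (joinN T R n)" unfolding T_def by (rule nice_joinN[OF sets.top niceR])
      moreover have "block_join N g Q n 0 = joinN T R n"
        unfolding block_join_def R_def T_def by simp
      ultimately show ?thesis by simp
    qed
    have "part_entropy (M 0) (block_join M f (\<lambda>n. pull (\<pi> n) (space (M n)) (Q n)) n 0)
        = part_entropy (N 0) (block_join N g Q n 0)" for n
      unfolding bj S_def
      by (rule entropy_pull[OF pm(1) pm(2) niceB])
    note pe = this
    have "(\<lambda>n. ereal (part_entropy (N 0) (block_join N g Q n 0) / real n)) =
          (\<lambda>n. ereal (part_entropy (M 0) (block_join M f (\<lambda>n. pull (\<pi> n) (space (M n)) (Q n)) n 0) / real n))"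
      by (rule ext) (rule arg_cong[where f="\<lambda>x. ereal (x / real _)"], rule pe[symmetric])
    then show ?thesis unfolding ent_seq_def by (rule arg_cong)
  qed
  have inE: "(\<lambda>n. pull (\<pi> n) (space (M n)) (Q n)) \<in> E" if "Q \<in> F" for Q
    using assms(5) that unfolding semiconj_def by blast
  show ?thesis unfolding ent_class_def
  proof (rule SUP_least)
    fix Q assume "Q \<in> F"
    then have "ent_seq N g Q = ent_seq M f (\<lambda>n. pull (\<pi> n) (space (M n)) (Q n))" by (rule key)
    also have "\<dots> \<le> (SUP P\<in>E. ent_seq M f P)" by (rule SUP_upper[OF inE[OF \<open>Q \<in> F\<close>]])
    finally show "ent_seq N g Q \<le> (SUP P\<in>E. ent_seq M f P)" .
  qed
qed

end
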